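(* Let $A\in M_{r\times m}(\mathbb{Z})$ have rank $r<m$, let $V\in M_m(\mathbb{Z})$ be unimodular with $AV$ in column Hermite normal form, $V=[V_{\mathfrak a}\ \ V_{\mathfrak b}]$ with $V_{\mathfrak a}$ the first $r$ columns, and $W=V^{-1}=\begin{bmatrix}W_{\mathfrak a}\\ W_{\mathfrak b}\end{bmatrix}$ with $W_{\mathfrak a}$ the first $r$ rows. Let $P\in M_{m\times s}(\mathbb{Z})$. Then there exists a unimodular matrix $C\in M_{m-r}(\mathbb{Z})$ such that the first $s$ columns of $V_{\mathfrak b}C$ are exactly the columns of $P$ if and only if (1) $AP=0$, and (2) $W_{\mathfrak b}P\in M_{(m-r)\times s}(\mathbb{Z})$ can be extended to a unimodular matrix, i.e. there is an integer matrix $E'$ with $m-r-s$ columns such that $[W_{\mathfrak b}P\ \ E']$ is unimodular.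
   Context: A unimodular matrix is a square integer matrix with determinant $\pm1$. Column Hermite normal form: lower triangular integer matrix with zero columns on the right, positive pivots each strictly below the previous one, zeros to the right of each pivot and entries to its left in its row nonnegative and smaller than it. Interpretation: for a variable vector $x=(x_1,\dots,x_m)$ of the model (time, dependent variables, parameters) and scaling matrix $A$, the monomials $x^{c}=\prod_i x_i^{c_i}$ for the columns $c$ of $V_{\mathfrak b}$ form a generating set of the rational invariants of the scaling action $x\mapsto\lambda^A*x$; replacing $V_{\mathfrak b}$ by $V_{\mathfrak b}C$ with $C$ unimodular gives another such generating set, and the condition says the monomials $x^{p}$ for columns $p$ of $P$ can be taken as part of it. *)

theory Defs
  imports Jordan_Normal_Form.DL_Rank Jordan_Normal_Form.Determinant
begin

definition unimodular :: "int mat \<Rightarrow> bool" where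
  "unimodular M \<longleftrightarrow> dim_row M = dim_col M \<and> (det M = 1 \<or> det M = -1)"

definition col_hnf :: "int mat \<Rightarrow> bool" where
  "col_hnf H \<longleftrightarrow> (\<exists>k p. k \<le> dim_col H \<and>
      (\<forall>j<k. p j < dim_row H) \<and>
      (\<forall>j j'. j < j' \<and> j' < k \<longrightarrow> p j < p j') \<and>
      (\<forall>j<k. H $$ (p j, j) > 0) \<and>
      (\<forall>j<k. \<forall>i<p j. H $$ (i, j) = 0) \<and>
      (\<forall>j<k. \<forall>j'. j < j' \<and> j' < dim_col H \<longrightarrow> H $$ (p j, j') = 0) \<and>
      (\<forall>j<k. \<forall>j'<j. 0 \<le> H $$ (p j, j') \<and> H $$ (p j, j') < H $$ (p j, j)) \<and>
      (\<forall>j. k \<le> j \<and> j < dim_col H \<longrightarrow> (\<forall>i<dim_row H. H $$ (i, j) = 0)))"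

definition col_block :: "int mat \<Rightarrow> nat \<Rightarrow> nat \<Rightarrow> int mat" where
  "col_block M a c = mat (dim_row M) c (\<lambda>(i, j). M $$ (i, a + j))"

definition row_block :: "int mat \<Rightarrow> nat \<Rightarrow> nat \<Rightarrow> int mat" where
  "row_block M a c = mat c (dim_col M) (\<lambda>(i, j). M $$ (a + i, j))"

definition append_cols :: "int mat \<Rightarrow> int mat \<Rightarrow> int mat" where
  "append_cols M N = mat (dim_row M) (dim_col M + dim_col N)
     (\<lambda>(i, j). if j < dim_col M then M $$ (i, j) else N $$ (i, j - dim_col M))"

definition int_rank :: "int mat \<Rightarrow> nat" where
  "int_rank M = vec_space.rank (dim_row M) (map_mat rat_of_int M)"

end

theory Submission
  imports Defs
begin

lemma (in vec_space) rank_witness: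
  assumes "A \<in> carrier_mat n nc"
  shows "\<exists>S. S \<subseteq> set (cols A) \<and> lin_indpt S \<and> card S = rank A"
proof -
  obtain S where S: "maximal S (\<lambda>T. T \<subseteq> set (cols A) \<and> lin_indpt T)"
    using maximal_exists[of "(\<lambda>T. T \<subseteq> set (cols A) \<and> lin_indpt T)" "card (set (cols A))" "{}"]
    by (meson List.finite_set card_mono empty_iff empty_subsetI finite_lin_indpt2 rev_finite_subset)
  show ?thesis using rank_card_indpt[OF assms S] S unfolding maximal_def by auto
qed

lemma int_rank_minor:
  assumes A: "A \<in> carrier_mat r m" and rk: "int_rank A = r"
  shows "\<exists>g. (\<forall>j<r. g j < m) \<and> det (mat r r (\<lambda>(i,j). A $$ (i, g j))) \<noteq> 0"
proof -
  interpret V: vec_space "TYPE(rat)" r .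
  define A' where "A' = map_mat rat_of_int A"
  have A': "A' \<in> carrier_mat r m" using A unfolding A'_def by auto
  have rk': "V.rank A' = r" using rk A unfolding int_rank_def A'_def by auto
  obtain S where S: "S \<subseteq> set (cols A')" "V.lin_indpt S" "card S = r"
    using V.rank_witness[OF A'] rk' by auto
  have fS: "finite S" using S(1) finite_subset by blast
  obtain xs where xs: "set xs = S" "distinct xs" using finite_distinct_list[OF fS] by blast
  have lxs: "length xs = r" using xs S(3) distinct_card by fastforce
  have xsc: "set xs \<subseteq> carrier_vec r" using xs S(1) A' cols_dim by (metis carrier_matD(1) subset_trans)
  define B' where "B' = mat_of_cols r xs"
  have B': "B' \<in> carrier_mat r r" unfolding B'_def using lxs by (metis mat_of_cols_carrier(1))
  have cB: "cols B' = xs" unfolding B'_def using xsc by simp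
  have "V.rank B' = r" using V.lin_indpt_full_rank[OF B'] cB xs S by auto
  hence dB: "det B' \<noteq> 0" using V.det_rank_iff[OF B'] by simp
  have "\<forall>j<r. \<exists>i<m. xs ! j = col A' i"
  proof (intro allI impI)
    fix j assume "j < r"
    hence "xs ! j \<in> set (cols A')" using xs S(1) lxs by auto
    then obtain i where "i < length (cols A')" "cols A' ! i = xs ! j" by (metis in_set_conv_nth)
    thus "\<exists>i<m. xs ! j = col A' i" using A' by auto
  qed
  then obtain g where g: "\<And>j. j < r \<Longrightarrow> g j < m \<and> xs ! j = col A' (g j)" by metis
  have "B' = map_mat rat_of_int (mat r r (\<lambda>(i,j). A $$ (i, g j)))"
  proof (rule eq_matI)
    fix i j assume ij: "i < dim_row (map_mat rat_of_int (mat r r (\<lambda>(i,j). A $$ (i, g j))))"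
        "j < dim_col (map_mat rat_of_int (mat r r (\<lambda>(i,j). A $$ (i, g j))))"
    hence "i < r" "j < r" by auto
    have "B' $$ (i,j) = col B' j $ i" using B' \<open>i<r\<close> \<open>j<r\<close> by auto
    also have "\<dots> = xs ! j $ i" using cB B' \<open>j<r\<close> by (metis carrier_matD(2) cols_nth)
    also have "\<dots> = col A' (g j) $ i" using g \<open>j<r\<close> by auto
    also have "\<dots> = rat_of_int (A $$ (i, g j))" using A A'_def g \<open>i<r\<close> \<open>j<r\<close> by auto
    finally show "B' $$ (i,j) = map_mat rat_of_int (mat r r (\<lambda>(i,j). A $$ (i, g j))) $$ (i,j)"
      using \<open>i<r\<close> \<open>j<r\<close> by auto
  qed (use B' in auto)
  hence "det (mat r r (\<lambda>(i,j). A $$ (i, g j))) \<noteq> 0" using dB by (metis of_int_hom.hom_det of_int_0)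
  thus ?thesis using g by blast
qed

definition sel :: "nat \<Rightarrow> nat \<Rightarrow> nat \<Rightarrow> int mat" where
  "sel m a c = mat m c (\<lambda>(k,j). if k = a + j then 1 else 0)"

lemma sel_carrier[simp]: "sel m a c \<in> carrier_mat m c"
  unfolding sel_def by auto

lemma sel_dims[simp]: "dim_row (sel m a c) = m" "dim_col (sel m a c) = c"
  unfolding sel_def by auto

lemma sum_sel: "j < c \<Longrightarrow> a + c \<le> (m::nat) \<Longrightarrow>
  (\<Sum>l\<in>{0..<m}. f l * (if l = a + j then 1 else 0)) = (f (a + j) :: int)"
proof -
  assume "j < c" "a + c \<le> m"
  have "(\<Sum>l\<in>{0..<m}. f l * (if l = a + j then 1 else 0)) = (\<Sum>l\<in>{0..<m}. if l = a + j then f l else 0)"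
    by (rule sum.cong) auto
  also have "\<dots> = f (a + j)" using \<open>j < c\<close> \<open>a + c \<le> m\<close> by (subst sum.delta) auto
  finally show ?thesis .
qed

lemma sum_sel': "j < c \<Longrightarrow> a + c \<le> (m::nat) \<Longrightarrow>
  (\<Sum>l\<in>{0..<m}. (if l = a + j then 1 else 0) * f l) = (f (a + j) :: int)"
  using sum_sel[of j c a m f] by (simp add: mult.commute)

lemma col_block_sel:
  assumes "M \<in> carrier_mat n m" "a + c \<le> m"
  shows "col_block M a c = M * sel m a c"
  by (rule eq_matI) (use assms in \<open>auto simp: col_block_def sel_def scalar_prod_def sum_sel\<close>)

lemma row_block_sel:
  assumes "M \<in> carrier_mat m q" "a + c \<le> m"
  shows "row_block M a c = transpose_mat (sel m a c) * M"
  by (rule eq_matI) (use assms in \<open>auto simp: row_block_def sel_def scalar_prod_def sum_sel'\<close>)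

lemma sel_tsel:
  assumes "a + c \<le> m"
  shows "transpose_mat (sel m a c) * sel m a c = 1\<^sub>m c"
  by (rule eq_matI) (use assms in \<open>auto simp: sel_def scalar_prod_def sum_sel'\<close>)

lemma sel_tsel0:
  assumes "r + n \<le> m"
  shows "transpose_mat (sel m 0 r) * sel m r n = 0\<^sub>m r n"
  by (rule eq_matI) (use assms in \<open>auto simp: sel_def scalar_prod_def sum_sel'\<close>)

lemma sel_sum_id:
  assumes "r + n = m"
  shows "sel m 0 r * transpose_mat (sel m 0 r) + sel m r n * transpose_mat (sel m r n) = 1\<^sub>m m"
proof (rule eq_matI)
  fix i j assume "i < dim_row (1\<^sub>m m :: int mat)" "j < dim_col (1\<^sub>m m :: int mat)"
  hence ij: "i < m" "j < m" by auto
  have e1: "(sel m 0 r * transpose_mat (sel m 0 r)) $$ (i,j) = (if i = j \<and> i < r then 1 else 0)"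
  proof -
    have "(sel m 0 r * transpose_mat (sel m 0 r)) $$ (i,j) = (\<Sum>l\<in>{0..<r}. (if i = l then 1 else 0) * (if j = l then 1 else 0))"
      using ij by (auto simp: sel_def scalar_prod_def)
    also have "\<dots> = (\<Sum>l\<in>{0..<r}. if l = i then (if j = i then 1 else 0) else 0)"
      by (rule sum.cong) auto
    also have "\<dots> = (if i = j \<and> i < r then 1 else 0)" by (simp add: sum.delta sum.delta')
    finally show ?thesis .
  qed
  have e2: "(sel m r n * transpose_mat (sel m r n)) $$ (i,j) = (if i = j \<and> r \<le> i then 1 else 0)"
  proof -
    have "(sel m r n * transpose_mat (sel m r n)) $$ (i,j) = (\<Sum>l\<in>{0..<n}. (if i = r + l then 1 else 0) * (if j = r + l then 1 else 0))"
      using ij by (auto simp: sel_def scalar_prod_def)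
    also have "\<dots> = (\<Sum>l\<in>{0..<n}. if l = i - r then (if i = j \<and> r \<le> i then 1 else 0) else 0)"
      by (rule sum.cong) auto
    also have "\<dots> = (if i = j \<and> r \<le> i then 1 else 0)" using ij assms by (auto simp: sum.delta sum.delta')
    finally show ?thesis .
  qed
  show "(sel m 0 r * transpose_mat (sel m 0 r) + sel m r n * transpose_mat (sel m r n)) $$ (i, j) = 1\<^sub>m m $$ (i, j)"
    using ij e1 e2 by (auto split: if_splits)
qed (use assms in auto)

lemma append_cols_split:
  assumes "C \<in> carrier_mat n n" "s \<le> n"
  shows "append_cols (col_block C 0 s) (col_block C s (n - s)) = C"
  by (rule eq_matI) (use assms in \<open>auto simp: append_cols_def col_block_def\<close>)

lemma col_block_append:
  assumes "X \<in> carrier_mat n s"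
  shows "col_block (append_cols X E) 0 s = X"
  by (rule eq_matI) (use assms in \<open>auto simp: append_cols_def col_block_def\<close>)

lemma append_cols_carrier:
  assumes "X \<in> carrier_mat n s" "E \<in> carrier_mat n t"
  shows "append_cols X E \<in> carrier_mat n (s + t)"
  using assms by (auto simp: append_cols_def)

lemma int_inv_comm:
  assumes V: "V \<in> carrier_mat m m" and W: "W \<in> carrier_mat m m" and VW: "V * W = 1\<^sub>m m"
  shows "W * V = (1\<^sub>m m :: int mat)"
proof -
  have "map_mat rat_of_int V * map_mat rat_of_int W = map_mat rat_of_int (V * W)"
    by (rule of_int_hom.mat_hom_mult[OF V W, symmetric])
  also have "\<dots> = 1\<^sub>m m" unfolding VW by (rule of_int_hom.mat_hom_one)
  finally have "map_mat rat_of_int V * map_mat rat_of_int W = 1\<^sub>m m" .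
  hence "map_mat rat_of_int W * map_mat rat_of_int V = 1\<^sub>m m"
    by (rule mat_mult_left_right_inverse[OF map_carrier_mat[THEN iffD2, OF V] map_carrier_mat[THEN iffD2, OF W]])
  hence "map_mat rat_of_int (W * V) = map_mat rat_of_int (1\<^sub>m m)"
    unfolding of_int_hom.mat_hom_mult[OF W V] of_int_hom.mat_hom_one .
  thus ?thesis by (rule of_int_hom.mat_hom_inj)
qed

lemma lower_tri_inj:
  assumes H: "H \<in> carrier_mat r r" and dg: "\<And>i. i < r \<Longrightarrow> H $$ (i,i) \<noteq> (0::int)"
    and up: "\<And>i j. i < j \<Longrightarrow> j < r \<Longrightarrow> H $$ (i,j) = 0"
    and Y: "Y \<in> carrier_mat r s" and HY: "H * Y = 0\<^sub>m r s"
  shows "Y = 0\<^sub>m r s"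
proof -
  have main: "\<And>i. i < r \<Longrightarrow> Y $$ (i,c) = 0" if c: "c < s" for c
  proof -
    fix i show "i < r \<Longrightarrow> Y $$ (i,c) = 0"
    proof (induction i rule: less_induct)
      case (less i)
      have "0 = (H * Y) $$ (i,c)" using HY less.prems c by auto
      also have "\<dots> = (\<Sum>l\<in>{0..<r}. H $$ (i,l) * Y $$ (l,c))"
        using H Y less.prems c by (auto simp: scalar_prod_def)
      also have "\<dots> = (\<Sum>l\<in>{0..<r}. if l = i then H $$ (i,i) * Y $$ (i,c) else 0)"
      proof (rule sum.cong)
        fix l assume l: "l \<in> {0..<r}"
        show "H $$ (i,l) * Y $$ (l,c) = (if l = i then H $$ (i,i) * Y $$ (i,c) else 0)"
        proof (cases "l < i")
          case True thus ?thesis using less.IH[of l] less.prems by simp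
        next
          case False thus ?thesis using up[of i l] l by (cases "l = i") auto
        qed
      qed simp
      also have "\<dots> = H $$ (i,i) * Y $$ (i,c)" using less.prems by (subst sum.delta) auto
      finally show ?case using dg[OF less.prems] by simp
    qed
  qed
  show ?thesis by (rule eq_matI) (use Y main in simp_all)
qed

lemma strict_mono_ge:
  fixes k :: nat and p :: "nat \<Rightarrow> nat" and j d :: nat
  assumes "\<And>j j'. j < j' \<Longrightarrow> j' < k \<Longrightarrow> p j < p j'"
  shows "j < k \<Longrightarrow> j + d < k \<Longrightarrow> p j + d \<le> p (j + d)"
proof (induction d)
  case (Suc d)
  hence "p j + d \<le> p (j + d)" by simp
  moreover have "p (j + d) < p (j + Suc d)" using assms[of "j+d" "j + Suc d"] Suc.prems by simp
  ultimately show ?case by simp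
qed simp

lemma hnf_cases:
  assumes H: "H \<in> carrier_mat r m" and hnf: "col_hnf H" and rm: "r \<le> m"
  shows "(\<forall>i<r. \<forall>j. r \<le> j \<and> j < m \<longrightarrow> H $$ (i,j) = 0) \<and>
    ((\<forall>i<r. H $$ (i,i) > 0 \<and> (\<forall>j. i < j \<and> j < m \<longrightarrow> H $$ (i,j) = 0)) \<or>
     (0 < r \<and> (\<forall>i<r. H $$ (i, r - 1) = 0)))"
proof -
  obtain k p where k: "k \<le> m" and pr: "\<forall>j<k. p j < r"
    and mono: "\<forall>j j'. j < j' \<and> j' < k \<longrightarrow> p j < p j'"
    and pos: "\<forall>j<k. H $$ (p j, j) > 0"
    and right: "\<forall>j<k. \<forall>j'. j < j' \<and> j' < m \<longrightarrow> H $$ (p j, j') = 0"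
    and zero: "\<forall>j. k \<le> j \<and> j < m \<longrightarrow> (\<forall>i<r. H $$ (i, j) = 0)"
    using hnf H unfolding col_hnf_def by auto
  have mono': "\<And>j j'. j < j' \<Longrightarrow> j' < k \<Longrightarrow> p j < p j'" using mono by blast
  have ge: "j \<le> p j" if "j < k" for j
    using strict_mono_ge[of k p 0 j] mono' that by simp
  have kr: "k \<le> r"
  proof (cases k)
    case (Suc k') thus ?thesis using ge[of k'] pr by force
  qed simp
  have z1: "\<forall>i<r. \<forall>j. r \<le> j \<and> j < m \<longrightarrow> H $$ (i,j) = 0" using zero kr by auto
  show ?thesis
  proof (cases "k = r")
    case True
    have pj: "p j = j" if "j < r" for j
    proof -
      have "p j + (r - 1 - j) \<le> p (j + (r - 1 - j))"
        using strict_mono_ge[of k p j "r - 1 - j"] mono' that True by simp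
      moreover have "j + (r - 1 - j) = r - 1" using that by simp
      moreover have "p (r - 1) < r" using pr True that by simp
      ultimately have "p j \<le> j" by simp
      thus ?thesis using ge[of j] that True by simp
    qed
    have "\<forall>i<r. H $$ (i,i) > 0 \<and> (\<forall>j. i < j \<and> j < m \<longrightarrow> H $$ (i,j) = 0)"
    proof (intro allI impI)
      fix i assume i: "i < r"
      have "H $$ (i,i) > 0" using pos i True pj[OF i] by metis
      moreover have "\<forall>j. i < j \<and> j < m \<longrightarrow> H $$ (i,j) = 0" using right i True pj[OF i] by metis
      ultimately show "H $$ (i,i) > 0 \<and> (\<forall>j. i < j \<and> j < m \<longrightarrow> H $$ (i,j) = 0)" by blast
    qed
    thus ?thesis using z1 by blast
  next
    case False
    hence "k \<le> r - 1" "r - 1 < m" "0 < r" using kr rm by auto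
    thus ?thesis using z1 zero by auto
  qed
qed

lemma sum_ind: "(\<Sum>l\<in>{0..<r::nat}. f l * (if j = l then 1 else 0)) = (if j < r then f j else (0::int))"
proof -
  have "(\<Sum>l\<in>{0..<r::nat}. f l * (if j = l then 1 else 0)) = (\<Sum>l\<in>{0..<r}. if l = j then f l else 0)"
    by (rule sum.cong) auto
  also have "\<dots> = (if j < r then f j else 0)" by (subst sum.delta) auto
  finally show ?thesis .
qed

lemma sum_ind2: "x < m \<Longrightarrow> (\<Sum>l\<in>{0..<m::nat}. f l * (if l = x then 1 else 0)) = (f x :: int)"
proof -
  assume x: "x < m"
  have "(\<Sum>l\<in>{0..<m::nat}. f l * (if l = x then 1 else 0)) = (\<Sum>l\<in>{0..<m}. if l = x then f l else 0)"
    by (rule sum.cong) auto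
  also have "\<dots> = f x" using x by (subst sum.delta) auto
  finally show ?thesis .
qed

lemma det_zero_last_col:
  assumes H: "H \<in> carrier_mat r r" and r: "0 < r" and z: "\<forall>i<r. H $$ (i, r - 1) = (0::int)"
  shows "det H = 0"
proof -
  have "det H = (\<Sum> p | p permutes {0 ..< r}. signof p * (\<Prod>j<r. H $$ (p j, j)))"
    by (rule det_col[OF H])
  also have "\<dots> = (\<Sum> p | p permutes {0 ..< r}. 0)"
  proof (rule sum.cong)
    fix p assume "p \<in> {p. p permutes {0..<r}}"
    hence "p (r - 1) < r" using r by (auto simp: permutes_in_image)
    hence "H $$ (p (r - 1), r - 1) = 0" using z by simp
    hence "(\<Prod>j<r. H $$ (p j, j)) = 0" using r by (intro prod_zero) (auto intro!: bexI[of _ "r - 1"])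
    thus "signof p * (\<Prod>j<r. H $$ (p j, j)) = 0" by simp
  qed simp
  finally show ?thesis by simp
qed

lemma massoc: "dim_col A = dim_row B \<Longrightarrow> dim_col B = dim_row C \<Longrightarrow> (A * B) * C = A * (B * (C :: int mat))"
  by (rule assoc_mult_mat[of A "dim_row A" "dim_col A" B "dim_col B" C "dim_col C"]) auto

theorem mainTheorem4:
  fixes A V W P :: "int mat" and r m s :: nat
  assumes A_dim: "A \<in> carrier_mat r m"
    and rank_A: "int_rank A = r"
    and r_lt_m: "r < m"
    and V_dim: "V \<in> carrier_mat m m"
    and V_unimod: "unimodular V"
    and AV_hnf: "col_hnf (A * V)"
    and W_dim: "W \<in> carrier_mat m m"
    and W_inv: "V * W = 1\<^sub>m m"
    and P_dim: "P \<in> carrier_mat m s"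
  shows "(\<exists>C. C \<in> carrier_mat (m - r) (m - r) \<and> unimodular C \<and> s \<le> m - r \<and>
            col_block (col_block V r (m - r) * C) 0 s = P)
     \<longleftrightarrow> (A * P = 0\<^sub>m r s \<and>
          (\<exists>E'. s \<le> m - r \<and> E' \<in> carrier_mat (m - r) (m - r - s) \<and>
             unimodular (append_cols (row_block W r (m - r) * P) E')))"
proof -
  define n where "n = m - r"
  have rn: "r + n = m" using r_lt_m n_def by simp
  define H0 where "H0 = A * V"
  have H0: "H0 \<in> carrier_mat r m" using A_dim V_dim H0_def by simp
  have WV: "W * V = 1\<^sub>m m" by (rule int_inv_comm[OF V_dim W_dim W_inv])
  define Sa where "Sa = sel m 0 r"
  define Sb where "Sb = sel m r n"
  have Sa: "Sa \<in> carrier_mat m r" and TSa: "transpose_mat Sa \<in> carrier_mat r m"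
    unfolding Sa_def by auto
  have Sb: "Sb \<in> carrier_mat m n" and TSb: "transpose_mat Sb \<in> carrier_mat n m"
    unfolding Sb_def by auto
  have hc: "(\<forall>i<r. \<forall>j. r \<le> j \<and> j < m \<longrightarrow> H0 $$ (i,j) = 0) \<and>
    ((\<forall>i<r. H0 $$ (i,i) > 0 \<and> (\<forall>j. i < j \<and> j < m \<longrightarrow> H0 $$ (i,j) = 0)) \<or>
     (0 < r \<and> (\<forall>i<r. H0 $$ (i, r - 1) = 0)))"
    by (rule hnf_cases[OF H0]) (use AV_hnf H0_def r_lt_m in auto)
  define Hr where "Hr = H0 * Sa"
  have Hr: "Hr \<in> carrier_mat r r" using H0 Sa Hr_def by simp
  have Hr_cb: "Hr = col_block H0 0 r" using col_block_sel[OF H0, of 0 r] r_lt_m unfolding Hr_def Sa_def by simp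
  have Hr_ent: "Hr $$ (i,j) = H0 $$ (i,j)" if "i < r" "j < r" for i j
    using that H0 unfolding Hr_cb col_block_def by simp
  have H0_fact: "H0 = Hr * transpose_mat Sa"
  proof (rule eq_matI)
    fix i j assume ij: "i < dim_row (Hr * transpose_mat Sa)" "j < dim_col (Hr * transpose_mat Sa)"
    hence i: "i < r" and j: "j < m" using Hr TSa by auto
    have "(Hr * transpose_mat Sa) $$ (i,j) = (\<Sum>l\<in>{0..<r}. Hr $$ (i,l) * (if j = l then 1 else 0))"
      using i j Hr unfolding Sa_def by (auto simp: scalar_prod_def sel_def)
    also have "\<dots> = (if j < r then Hr $$ (i,j) else 0)" by (rule sum_ind)
    also have "\<dots> = H0 $$ (i,j)" using Hr_ent[OF i] hc i j by auto
    finally show "H0 $$ (i,j) = (Hr * transpose_mat Sa) $$ (i,j)" by simp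
  qed (use H0 Hr TSa in auto)
  have AVb: "H0 * Sb = 0\<^sub>m r n"
  proof (rule eq_matI)
    fix i j assume ij: "i < dim_row (0\<^sub>m r n :: int mat)" "j < dim_col (0\<^sub>m r n :: int mat)"
    hence i: "i < r" and j: "j < n" by auto
    have cb: "H0 * Sb = col_block H0 r n" using col_block_sel[OF H0, of r n] rn unfolding Sb_def by simp
    have "(H0 * Sb) $$ (i,j) = H0 $$ (i, r + j)"
      unfolding cb col_block_def using H0 i j by simp
    also have "\<dots> = 0" using hc i j rn by auto
    finally show "(H0 * Sb) $$ (i,j) = 0\<^sub>m r n $$ (i,j)" using i j by simp
  qed (use H0 Sb in auto)
  have full: "\<forall>i<r. H0 $$ (i,i) > 0 \<and> (\<forall>j. i < j \<and> j < m \<longrightarrow> H0 $$ (i,j) = 0)"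
  proof (rule ccontr)
    assume nf: "\<not> ?thesis"
    hence z: "0 < r" "\<forall>i<r. H0 $$ (i, r - 1) = 0" using hc by auto
    obtain g where g: "\<forall>j<r. g j < m" and dB: "det (mat r r (\<lambda>(i,j). A $$ (i, g j))) \<noteq> 0"
      using int_rank_minor[OF A_dim rank_A] by blast
    define G where "G = mat m r (\<lambda>(l,j). if l = g j then 1 else (0::int))"
    have G: "G \<in> carrier_mat m r" unfolding G_def by simp
    have BAG: "mat r r (\<lambda>(i,j). A $$ (i, g j)) = A * G"
    proof (rule eq_matI)
      fix i j assume "i < dim_row (A * G)" "j < dim_col (A * G)"
      hence i: "i < r" and j: "j < r" using A_dim G by auto
      have "(A * G) $$ (i,j) = (\<Sum>l\<in>{0..<m}. A $$ (i,l) * (if l = g j then 1 else 0))"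
        using i j A_dim G unfolding G_def by (auto simp: scalar_prod_def)
      also have "\<dots> = A $$ (i, g j)" using g j by (intro sum_ind2) auto
      finally show "mat r r (\<lambda>(i,j). A $$ (i, g j)) $$ (i,j) = (A * G) $$ (i,j)" using i j by simp
    qed (use A_dim G in auto)
    have "A = A * (V * W)" using W_inv A_dim by simp
    also have "\<dots> = H0 * W" unfolding H0_def using A_dim V_dim W_dim by simp
    also have "\<dots> = Hr * (transpose_mat Sa * W)" unfolding H0_fact using Hr TSa W_dim by simp
    finally have "A * G = Hr * (transpose_mat Sa * W) * G" by simp
    also have "\<dots> = Hr * (transpose_mat Sa * W * G)"
      by (rule assoc_mult_mat[OF Hr _ G]) (use TSa W_dim in simp)
    finally have "A * G = Hr * (transpose_mat Sa * W * G)" .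
    hence "det (A * G) = det Hr * det (transpose_mat Sa * W * G)"
      using det_mult[OF Hr, of "transpose_mat Sa * W * G"] TSa W_dim G by simp
    also have "det Hr = 0"
      by (rule det_zero_last_col[OF Hr z(1)]) (use z Hr_ent in auto)
    finally show False using dB BAG by simp
  qed
  have Hr_inj: "Y = 0\<^sub>m r s" if Y: "Y \<in> carrier_mat r s" and HY: "Hr * Y = 0\<^sub>m r s" for Y
    by (rule lower_tri_inj[OF Hr _ _ Y HY]) (use full Hr_ent r_lt_m in \<open>auto\<close>)
  have Vb: "col_block V r n = V * Sb" unfolding Sb_def using col_block_sel[OF V_dim] rn by simp
  have Wb: "row_block W r n = transpose_mat Sb * W" unfolding Sb_def using row_block_sel[OF W_dim] rn by simp
  have TSbSb: "transpose_mat Sb * Sb = 1\<^sub>m n" unfolding Sb_def using sel_tsel rn by simp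
  have TSaSb: "transpose_mat Sa * Sb = 0\<^sub>m r n" unfolding Sa_def Sb_def using sel_tsel0 rn by simp
  have SS: "Sa * transpose_mat Sa + Sb * transpose_mat Sb = 1\<^sub>m m"
    unfolding Sa_def Sb_def by (rule sel_sum_id[OF rn])
  show ?thesis unfolding n_def[symmetric]
  proof
    assume "\<exists>C. C \<in> carrier_mat n n \<and> unimodular C \<and> s \<le> n \<and> col_block (col_block V r n * C) 0 s = P"
    then obtain C where C: "C \<in> carrier_mat n n" and uC: "unimodular C" and sn: "s \<le> n"
      and CP: "col_block (col_block V r n * C) 0 s = P" by blast
    define S0 where "S0 = sel n 0 s"
    have S0: "S0 \<in> carrier_mat n s" unfolding S0_def by simp
    note dims = carrier_matD[OF V_dim] carrier_matD[OF W_dim] carrier_matD[OF A_dim] carrier_matD[OF Sb]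
      carrier_matD[OF C] carrier_matD[OF S0] carrier_matD[OF TSb] carrier_matD[OF P_dim]
    have P_eq: "P = V * (Sb * (C * S0))"
    proof -
      have "P = (V * Sb * C) * S0" using CP Vb col_block_sel[of "V * Sb * C" m n 0 s] V_dim Sb C sn
        unfolding S0_def by simp
      thus ?thesis by (simp add: dims massoc)
    qed
    have "A * P = ((A * V) * Sb) * (C * S0)" unfolding P_eq by (simp add: dims massoc)
    also have "\<dots> = 0\<^sub>m r s" using AVb[unfolded H0_def] C S0 by simp
    finally have AP: "A * P = 0\<^sub>m r s" .
    have "row_block W r n * P = transpose_mat Sb * ((W * V) * (Sb * (C * S0)))"
      unfolding Wb P_eq by (simp add: dims massoc)
    also have "\<dots> = (transpose_mat Sb * Sb) * (C * S0)" unfolding WV by (simp add: dims massoc)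
    also have "\<dots> = col_block C 0 s" unfolding TSbSb using C S0 col_block_sel[OF C, of 0 s] sn S0_def by simp
    finally have WbP: "row_block W r n * P = col_block C 0 s" .
    have "append_cols (row_block W r n * P) (col_block C s (n - s)) = C"
      unfolding WbP by (rule append_cols_split[OF C sn])
    moreover have "col_block C s (n - s) \<in> carrier_mat n (n - s)" using C by (simp add: col_block_def)
    ultimately show "A * P = 0\<^sub>m r s \<and> (\<exists>E'. s \<le> n \<and> E' \<in> carrier_mat n (n - s) \<and>
             unimodular (append_cols (row_block W r n * P) E'))" using AP uC sn by metis
  next
    assume "A * P = 0\<^sub>m r s \<and> (\<exists>E'. s \<le> n \<and> E' \<in> carrier_mat n (n - s) \<and>
             unimodular (append_cols (row_block W r n * P) E'))"
    then obtain E' where AP: "A * P = 0\<^sub>m r s" and sn: "s \<le> n" and E': "E' \<in> carrier_mat n (n - s)"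
      and uC: "unimodular (append_cols (row_block W r n * P) E')" by blast
    define C where "C = append_cols (row_block W r n * P) E'"
    have WbP: "row_block W r n * P \<in> carrier_mat n s" unfolding Wb using TSb W_dim P_dim by simp
    have C: "C \<in> carrier_mat n n" unfolding C_def using append_cols_carrier[OF WbP E'] sn by simp
    define Y where "Y = transpose_mat Sa * (W * P)"
    define Z where "Z = transpose_mat Sb * (W * P)"
    have Y: "Y \<in> carrier_mat r s" unfolding Y_def using TSa W_dim P_dim by simp
    have Z: "Z \<in> carrier_mat n s" unfolding Z_def using TSb W_dim P_dim by simp
    have WP: "W * P \<in> carrier_mat m s" using W_dim P_dim by simp
    note dims = carrier_matD[OF V_dim] carrier_matD[OF W_dim] carrier_matD[OF A_dim] carrier_matD[OF Sb]
      carrier_matD[OF Sa] carrier_matD[OF TSa] carrier_matD[OF C] carrier_matD[OF Y] carrier_matD[OF Z]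
      carrier_matD[OF TSb] carrier_matD[OF P_dim]
    have "P = (V * W) * P" using W_inv P_dim by simp
    also have "\<dots> = V * ((Sa * transpose_mat Sa + Sb * transpose_mat Sb) * (W * P))"
      unfolding SS using V_dim W_dim P_dim by simp
    also have "\<dots> = V * (Sa * Y + Sb * Z)"
      unfolding Y_def Z_def
      by (subst add_mult_distrib_mat[of _ m m]) (use Sa TSa Sb TSb WP in \<open>simp_all add: dims massoc\<close>)
    also have "\<dots> = (V * Sa) * Y + (V * Sb) * Z"
      by (subst mult_add_distrib_mat[OF V_dim, where nc=s]) (use Sa Sb Y Z in \<open>simp_all add: dims massoc\<close>)
    finally have Pd: "P = (V * Sa) * Y + (V * Sb) * Z" .
    have "A * P = (H0 * Sa) * Y + (H0 * Sb) * Z"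
      unfolding H0_def
      by (subst Pd, subst mult_add_distrib_mat[OF A_dim, where nc=s]) (use V_dim Sa Sb Y Z in \<open>simp_all add: dims massoc\<close>)
    also have "\<dots> = Hr * Y" unfolding AVb Hr_def[symmetric] using Hr Y Z by simp
    finally have "Hr * Y = 0\<^sub>m r s" using AP by simp
    hence Y0: "Y = 0\<^sub>m r s" by (rule Hr_inj[OF Y])
    have P2: "P = V * Sb * Z" using Pd unfolding Y0 using V_dim Sa Sb Z by simp
    have "col_block (col_block V r n * C) 0 s = col_block V r n * col_block C 0 s"
      using col_block_sel[of "col_block V r n * C" m n 0 s] col_block_sel[OF C, of 0 s] sn C V_dim Sb Vb
      by (simp add: dims massoc carrier_matD[of "sel n 0 s" n s])
    also have "col_block C 0 s = Z" unfolding C_def Z_def Wb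
      using col_block_append[OF WbP] unfolding Wb using TSb W_dim P_dim by simp
    finally have "col_block (col_block V r n * C) 0 s = col_block V r n * Z" .
    hence cbP: "col_block (col_block V r n * C) 0 s = P" unfolding Vb using P2 by (simp only: assoc_mult_mat[OF V_dim Sb Z])
    show "\<exists>C. C \<in> carrier_mat n n \<and> unimodular C \<and> s \<le> n \<and> col_block (col_block V r n * C) 0 s = P"
    proof (intro exI[of _ C] conjI)
      show "unimodular C" unfolding C_def by (rule uC)
    qed (use C sn cbP in simp_all)
  qed
qed

end
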